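(* Let $(M,K,\Sigma,\underline{f},V)$ and $(M',K',\Sigma',\underline{f}',V')$ be $\mathbb{Q}$SK-systems, $\xi:\mathcal{A}(K)\to\mathcal{A}(K')$ an isomorphism preserving the Blanchfield form, and $\underline b=(b_i)_{1\le i\le2g}$, $\underline b'=(b'_i)_{1\le i\le 2g}$ generating families of $\mathcal{A}(K)$, $\mathcal{A}(K')$ associated with $V$, $V'$. If $V$ and $V'$ are invertible, then $\underline b$ and $\underline b'$ are $\mathbb{Q}$-bases of $\mathcal{A}(K)$ and $\mathcal{A}(K')$, and the matrix $P$ of $\xi$ in these bases (i.e. $\xi(b_i)=\sum_kP_{ki}b'_k$) is symplectic and satisfies $V'=PVP^t$.
   Context: $\mathbb{Q}$SK-pair $(M,K)$: a rational homology 3-sphere $M$ and a knot $K$ trivial in $H_1(M;\mathbb{Z})$. $\tilde X$: the infinite cyclic covering of the exterior of $K$, deck generator $\tau$ acting as $t$; $\mathcal{A}(K)=H_1(\tilde X;\mathbb{Q})$. Blanchfield form $\phi_K([J_1],[J_2])=lk_e(J_1,J_2)\bmod\mathbb{Q}[t^{\pm1}]$, $lk_e(J_1,J_2)=\frac{1}{\delta(t)\delta(t^{-1})}\sum_k lk(\delta(\tau)J_1,\tau^k(\delta(\tau)J_2))t^k$ ($J_1\cap\tau^kJ_2=\emptyset$, $\delta$ the annihilator). Preserving: $\phi_{K'}(\xi a,\xi b)=\phi_K(a,b)$. $J$: $2g\times2g$ block-diagonal with blocks $\begin{pmatrix}0&-1\\1&0\end{pmatrix}$; $P$ symplectic means $PJP^t=J$.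 $\mathbb{Q}$SK-system $(M,K,\Sigma,\underline f,V)$: Seifert surface $\Sigma$ of genus $g$, basis $(f_i)$ of $H_1(\Sigma;\mathbb{Z})$ with intersection matrix $-J$, $V_{ij}=lk(f_i,f_j^+)$, so $V-V^t=J$. Associated generators $(b_i)$: lifts to $\tilde X$ (in one copy of $M\setminus\Sigma$) of meridians of the $f_i$; they generate $\mathcal{A}(K)$ subject to relations $\sum_i(tV-V^t)_{ij}b_i$, and $\phi_K(b_i,b_k)=(1-t)((tV-V^t)^{-1})_{ki}\bmod\mathbb{Q}[t^{\pm1}]$. *)

theory Defs
  imports Main "HOL-Computational_Algebra.Polynomial" "HOL-Computational_Algebra.Fraction_Field"
begin

(* Square matrices of size n are functions nat => nat => _ ; only indices < n matter. *)

definition Jmat :: "nat \<Rightarrow> nat \<Rightarrow> rat" where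
  "Jmat i j = (if even i \<and> j = i + 1 then -1 else if odd i \<and> i = j + 1 then 1 else 0)"

definition mat_mult :: "nat \<Rightarrow> (nat \<Rightarrow> nat \<Rightarrow> rat) \<Rightarrow> (nat \<Rightarrow> nat \<Rightarrow> rat) \<Rightarrow> nat \<Rightarrow> nat \<Rightarrow> rat" where
  "mat_mult n A B i j = (\<Sum>k<n. A i k * B k j)"

definition mat_transp :: "(nat \<Rightarrow> nat \<Rightarrow> rat) \<Rightarrow> nat \<Rightarrow> nat \<Rightarrow> rat" where
  "mat_transp A i j = A j i"

definition mat_eq :: "nat \<Rightarrow> (nat \<Rightarrow> nat \<Rightarrow> 'x) \<Rightarrow> (nat \<Rightarrow> nat \<Rightarrow> 'x) \<Rightarrow> bool" where
  "mat_eq n A B \<longleftrightarrow> (\<forall>i<n. \<forall>j<n. A i j = B i j)"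

definition mat_invertible :: "nat \<Rightarrow> (nat \<Rightarrow> nat \<Rightarrow> rat) \<Rightarrow> bool" where
  "mat_invertible n A \<longleftrightarrow> (\<exists>B. mat_eq n (mat_mult n A B) (\<lambda>i j. if i = j then 1 else 0)
                                 \<and> mat_eq n (mat_mult n B A) (\<lambda>i j. if i = j then 1 else 0))"

definition symplectic :: "nat \<Rightarrow> (nat \<Rightarrow> nat \<Rightarrow> rat) \<Rightarrow> bool" where
  "symplectic g P \<longleftrightarrow> mat_eq (2*g) (mat_mult (2*g) (mat_mult (2*g) P Jmat) (mat_transp P)) Jmat"

definition seifert_matrix :: "nat \<Rightarrow> (nat \<Rightarrow> nat \<Rightarrow> rat) \<Rightarrow> bool" where
  "seifert_matrix g V \<longleftrightarrow> (\<forall>i<2*g. \<forall>j<2*g. V i j - V j i = Jmat i j)"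

definition pf :: "rat poly \<Rightarrow> rat poly fract" where
  "pf p = Fract p 1"

definition tvar :: "rat poly fract" where
  "tvar = pf [:0, 1:]"

definition tinv :: "rat poly fract" where
  "tinv = Fract 1 [:0, 1:]"

(* congruence modulo Q[t^{\<plusminus>1}] inside Q(t) *)
definition laurent :: "rat poly fract \<Rightarrow> bool" where
  "laurent x \<longleftrightarrow> (\<exists>p k. x = Fract p (monom 1 k))"

definition mod_laurent :: "rat poly fract \<Rightarrow> rat poly fract \<Rightarrow> bool" where
  "mod_laurent x y \<longleftrightarrow> laurent (x - y)"

definition pres_mat :: "(nat \<Rightarrow> nat \<Rightarrow> rat) \<Rightarrow> nat \<Rightarrow> nat \<Rightarrow> rat poly" where
  "pres_mat V i j = [: - V j i, V i j :]"

definition poly_act :: "(rat \<Rightarrow> 'a::ab_group_add \<Rightarrow> 'a) \<Rightarrow> ('a \<Rightarrow> 'a) \<Rightarrow> rat poly \<Rightarrow> 'a \<Rightarrow> 'a" where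
  "poly_act sc tau p x = (\<Sum>k\<le>degree p. sc (coeff p k) ((tau ^^ k) x))"

(* A Q[t^{\<plusminus>1}]-module: a Q-vector space with an invertible Q-linear operator tau (action of t) *)
definition laurent_module :: "(rat \<Rightarrow> 'a::ab_group_add \<Rightarrow> 'a) \<Rightarrow> ('a \<Rightarrow> 'a) \<Rightarrow> bool" where
  "laurent_module sc tau \<longleftrightarrow> vector_space sc \<and> Vector_Spaces.linear sc sc tau \<and> bij tau"

(* Blanchfield-type form: values in Q(t)/Q[t^{\<plusminus>1}] represented by representatives in Q(t);
   Q-bilinear and sesquilinear (phi(tau a,b) = t phi(a,b), phi(a, tau b) = t^{-1} phi(a,b)),
   all modulo Q[t^{\<plusminus>1}] *)
definition blanchfield_type_form ::
  "(rat \<Rightarrow> 'a::ab_group_add \<Rightarrow> 'a) \<Rightarrow> ('a \<Rightarrow> 'a) \<Rightarrow> ('a \<Rightarrow> 'a \<Rightarrow> rat poly fract) \<Rightarrow> bool" where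
  "blanchfield_type_form sc tau phi \<longleftrightarrow>
     (\<forall>x y z. mod_laurent (phi (x + y) z) (phi x z + phi y z)) \<and>
     (\<forall>x y z. mod_laurent (phi z (x + y)) (phi z x + phi z y)) \<and>
     (\<forall>c x y. mod_laurent (phi (sc c x) y) (pf [:c:] * phi x y)) \<and>
     (\<forall>c x y. mod_laurent (phi x (sc c y)) (pf [:c:] * phi x y)) \<and>
     (\<forall>x y. mod_laurent (phi (tau x) y) (tvar * phi x y)) \<and>
     (\<forall>x y. mod_laurent (phi x (tau y)) (tinv * phi x y))"

(* (b_i)_{i<2g} is a generating family associated with the Seifert matrix V:
   - the b_i generate the module over Q[t^{\<plusminus>1}],
   - they satisfy the relations  sum_i (tV - V^t)_{ij} b_i = 0,
   - these relations generate all relations (presentation),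
   - phi(b_i,b_k) = (1-t) ((tV - V^t)^{-1})_{ki}  mod Q[t^{\<plusminus>1}]. *)
definition assoc_generators ::
  "nat \<Rightarrow> (nat \<Rightarrow> nat \<Rightarrow> rat) \<Rightarrow> (rat \<Rightarrow> 'a::ab_group_add \<Rightarrow> 'a) \<Rightarrow> ('a \<Rightarrow> 'a)
     \<Rightarrow> ('a \<Rightarrow> 'a \<Rightarrow> rat poly fract) \<Rightarrow> (nat \<Rightarrow> 'a) \<Rightarrow> bool" where
  "assoc_generators g V sc tau phi b \<longleftrightarrow>
     module.span sc ({(tau ^^ k) (b i) | k i. i < 2*g} \<union> {(inv tau ^^ k) (b i) | k i. i < 2*g})
       = UNIV \<and>
     (\<forall>j<2*g. (\<Sum>i<2*g. poly_act sc tau (pres_mat V i j) (b i)) = 0) \<and>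
     (\<forall>p :: nat \<Rightarrow> rat poly. (\<Sum>i<2*g. poly_act sc tau (p i) (b i)) = 0 \<longrightarrow>
        (\<exists>(q :: nat \<Rightarrow> rat poly) k. \<forall>i<2*g. monom 1 k * p i = (\<Sum>j<2*g. q j * pres_mat V i j))) \<and>
     (\<exists>W :: nat \<Rightarrow> nat \<Rightarrow> rat poly fract.
        (\<forall>i<2*g. \<forall>j<2*g. (\<Sum>k<2*g. W i k * pf (pres_mat V k j)) = (if i = j then 1 else 0)) \<and>
        (\<forall>i<2*g. \<forall>j<2*g. (\<Sum>k<2*g. pf (pres_mat V i k) * W k j) = (if i = j then 1 else 0)) \<and>
        (\<forall>i<2*g. \<forall>k<2*g. mod_laurent (phi (b i) (b k)) (pf [:1, -1:] * W k i)))"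

definition is_family_basis :: "nat \<Rightarrow> (rat \<Rightarrow> 'a::ab_group_add \<Rightarrow> 'a) \<Rightarrow> (nat \<Rightarrow> 'a) \<Rightarrow> bool" where
  "is_family_basis n sc b \<longleftrightarrow> inj_on b {..<n} \<and> \<not> module.dependent sc (b ` {..<n})
     \<and> module.span sc (b ` {..<n}) = UNIV"

end

theory Submission
  imports Defs
begin


lemma pf_add: "pf (p + q) = pf p + pf q" by (simp add: pf_def)
lemma pf_diff: "pf (p - q) = pf p - pf q" by (simp add: pf_def)
lemma pf_minus: "pf (- p) = - pf p" by (simp add: pf_def)
lemma pf_mult: "pf (p * q) = pf p * pf q" by (simp add: pf_def)
lemma pf_0: "pf 0 = 0" by (simp add: pf_def fract_collapse)
lemma pf_1: "pf 1 = 1" by (simp add: pf_def fract_collapse)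
lemma pf_sum: "pf (\<Sum>x\<in>A. f x) = (\<Sum>x\<in>A. pf (f x))"
  by (induction A rule: infinite_finite_induct) (auto simp: pf_0 pf_add)
lemma pf_inj: "pf p = pf q \<longleftrightarrow> p = q" by (simp add: pf_def eq_fract)

lemma monom1_nz: "monom (1::rat) k \<noteq> 0" by simp

lemma laurent_0: "laurent 0"
  unfolding laurent_def by (rule exI[of _ 0], rule exI[of _ 0]) (simp add: fract_collapse)

lemma laurent_pf: "laurent (pf p)"
  unfolding laurent_def pf_def by (rule exI[of _ p], rule exI[of _ 0]) (simp add: one_poly_def)

lemma laurent_add: "laurent x \<Longrightarrow> laurent y \<Longrightarrow> laurent (x + y)"
proof -
  assume "laurent x" "laurent y"
  then obtain p k q l where x: "x = Fract p (monom 1 k)" and y: "y = Fract q (monom 1 l)"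
    unfolding laurent_def by blast
  have "x + y = Fract (p * monom 1 l + q * monom 1 k) (monom 1 (k + l))"
    by (simp add: x y mult_monom)
  then show ?thesis unfolding laurent_def by blast
qed

lemma laurent_minus: "laurent x \<Longrightarrow> laurent (- x)"
proof -
  assume "laurent x"
  then obtain p k where x: "x = Fract p (monom 1 k)" unfolding laurent_def by blast
  have "- x = Fract (- p) (monom 1 k)" by (simp add: x)
  then show ?thesis unfolding laurent_def by blast
qed

lemma laurent_diff: "laurent x \<Longrightarrow> laurent y \<Longrightarrow> laurent (x - y)"
  using laurent_add[of x "-y"] laurent_minus by simp

lemma laurent_mult_pf: "laurent x \<Longrightarrow> laurent (pf q * x)"
proof -
  assume "laurent x"
  then obtain p k where x: "x = Fract p (monom 1 k)" unfolding laurent_def by blast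
  have "pf q * x = Fract (q * p) (monom 1 k)" by (simp add: x pf_def)
  then show ?thesis unfolding laurent_def by blast
qed

lemma laurent_sum: "(\<And>x. x \<in> A \<Longrightarrow> laurent (f x)) \<Longrightarrow> laurent (\<Sum>x\<in>A. f x)"
  by (induction A rule: infinite_finite_induct) (auto simp: laurent_0 laurent_add)

lemma ml_refl: "mod_laurent x x" by (simp add: mod_laurent_def laurent_0)
lemma ml_sym: "mod_laurent x y \<Longrightarrow> mod_laurent y x"
  unfolding mod_laurent_def using laurent_minus by fastforce
lemma ml_trans: "mod_laurent x y \<Longrightarrow> mod_laurent y z \<Longrightarrow> mod_laurent x z"
  unfolding mod_laurent_def using laurent_add by fastforce
lemma ml_add: "mod_laurent x y \<Longrightarrow> mod_laurent x' y' \<Longrightarrow> mod_laurent (x + x') (y + y')"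
  unfolding mod_laurent_def using laurent_add by (fastforce simp: algebra_simps)
lemma ml_mult: "mod_laurent x y \<Longrightarrow> mod_laurent (pf q * x) (pf q * y)"
  unfolding mod_laurent_def using laurent_mult_pf by (fastforce simp: algebra_simps)
lemma ml_sum: "(\<And>x. x \<in> A \<Longrightarrow> mod_laurent (f x) (h x)) \<Longrightarrow> mod_laurent (\<Sum>x\<in>A. f x) (\<Sum>x\<in>A. h x)"
  by (induction A rule: infinite_finite_induct) (auto simp: ml_refl ml_add)


definition mm :: "nat \<Rightarrow> (nat \<Rightarrow> nat \<Rightarrow> 'r::comm_ring_1) \<Rightarrow> (nat \<Rightarrow> nat \<Rightarrow> 'r) \<Rightarrow> nat \<Rightarrow> nat \<Rightarrow> 'r" where
  "mm n A B = (\<lambda>i j. \<Sum>k<n. A i k * B k j)"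
definition tr :: "(nat \<Rightarrow> nat \<Rightarrow> 'r) \<Rightarrow> nat \<Rightarrow> nat \<Rightarrow> 'r" where
  "tr A = (\<lambda>i j. A j i)"
definition idm :: "nat \<Rightarrow> nat \<Rightarrow> 'r::comm_ring_1" where
  "idm = (\<lambda>i j. if i = j then 1 else 0)"

lemma mat_mult_mm: "mat_mult n A B = mm n A B"
  by (rule ext)+ (simp add: mat_mult_def mm_def)
lemma mat_transp_tr: "mat_transp A = tr A"
  by (rule ext)+ (simp add: mat_transp_def tr_def)

lemma mm_assoc: "mm n (mm n A B) C = mm n A (mm n B C)"
  unfolding mm_def
  apply (rule ext)+
  apply (simp add: sum_distrib_left sum_distrib_right mult.assoc)
  apply (rule sum.swap)
  done

lemma tr_mm: "tr (mm n A B) = mm n (tr B) (tr A)"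
  unfolding mm_def tr_def by (rule ext)+ (simp add: mult.commute)
lemma tr_tr[simp]: "tr (tr A) = A" unfolding tr_def by simp
lemma tr_idm[simp]: "tr idm = idm" unfolding tr_def idm_def by (rule ext)+ auto

lemma mat_eq_refl[simp]: "mat_eq n A A" by (simp add: mat_eq_def)
lemma mat_eq_sym: "mat_eq n A B \<Longrightarrow> mat_eq n B A" by (simp add: mat_eq_def)
lemma mat_eq_trans[trans]: "mat_eq n A B \<Longrightarrow> mat_eq n B C \<Longrightarrow> mat_eq n A C" by (simp add: mat_eq_def)
lemma mat_eq_trans2[trans]: "mat_eq n A B \<Longrightarrow> B = C \<Longrightarrow> mat_eq n A C" by simp
lemma mat_eq_trans3[trans]: "A = B \<Longrightarrow> mat_eq n B C \<Longrightarrow> mat_eq n A C" by simp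

lemma mat_eq_mm: "mat_eq n A A' \<Longrightarrow> mat_eq n B B' \<Longrightarrow> mat_eq n (mm n A B) (mm n A' B')"
  unfolding mat_eq_def mm_def by (auto intro!: sum.cong)
lemma mat_eq_tr: "mat_eq n A B \<Longrightarrow> mat_eq n (tr A) (tr B)"
  unfolding mat_eq_def tr_def by auto

lemma if01_mult: "(if P then 1 else 0) * (x::'r::comm_ring_1) = (if P then x else 0)" by simp
lemma mult_if01: "(x::'r::comm_ring_1) * (if P then 1 else 0) = (if P then x else 0)" by simp
lemma mm_idm_left: "mat_eq n (mm n idm A) A"
  unfolding mat_eq_def mm_def idm_def by (simp only: if01_mult) simp
lemma mm_idm_right: "mat_eq n (mm n A idm) A"
  unfolding mat_eq_def mm_def idm_def by (simp only: mult_if01) simp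

lemma mm_diff_left: "mm n (\<lambda>i j. A i j - B i j) C = (\<lambda>i j. mm n A C i j - mm n B C i j)"
  unfolding mm_def by (simp add: algebra_simps sum_subtractf)
lemma mm_diff_right: "mm n C (\<lambda>i j. A i j - B i j) = (\<lambda>i j. mm n C A i j - mm n C B i j)"
  unfolding mm_def by (simp add: algebra_simps sum_subtractf)
lemma mm_add_left: "mm n (\<lambda>i j. A i j + B i j) C = (\<lambda>i j. mm n A C i j + mm n B C i j)"
  unfolding mm_def by (simp add: algebra_simps sum.distrib)
lemma mm_add_right: "mm n C (\<lambda>i j. A i j + B i j) = (\<lambda>i j. mm n C A i j + mm n C B i j)"
  unfolding mm_def by (simp add: algebra_simps sum.distrib)
lemma mm_scal_left: "mm n (\<lambda>i j. c * A i j) C = (\<lambda>i j. c * mm n A C i j)"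
  unfolding mm_def by (simp add: algebra_simps sum_distrib_left)
lemma mm_scal_right: "mm n C (\<lambda>i j. c * A i j) = (\<lambda>i j. c * mm n C A i j)"
  unfolding mm_def by (simp add: algebra_simps sum_distrib_left)

lemma mm_hom:
  assumes "\<And>x y. f (x + y) = f x + f y" "\<And>x y. f (x * y) = f x * f y" "f 0 = 0"
  shows "(\<lambda>i j. f (mm n A B i j)) = mm n (\<lambda>i j. f (A i j)) (\<lambda>i j. f (B i j))"
proof -
  have "f (sum h S) = sum (\<lambda>x. f (h x)) S" for h and S :: "nat set"
    by (induction S rule: infinite_finite_induct) (auto simp: assms)
  then show ?thesis unfolding mm_def by (simp add: assms)
qed

lemma mm_pf: "(\<lambda>i j. pf (mm n A B i j)) = mm n (\<lambda>i j. pf (A i j)) (\<lambda>i j. pf (B i j))"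
  by (rule mm_hom) (auto simp: pf_add pf_mult pf_0)

lemma mm_const_poly: "(\<lambda>i j. [:mm n A B i j:]) = mm n (\<lambda>i j. [:A i j:]) (\<lambda>i j. [:B i j:])"
  by (rule mm_hom) auto

lemma cancel_left:
  fixes V B :: "nat \<Rightarrow> nat \<Rightarrow> 'r::comm_ring_1"
  assumes "mat_eq n (mm n B V) idm" "mat_eq n (mm n V X) (\<lambda>i j. 0)"
  shows "mat_eq n X (\<lambda>i j. 0)"
proof -
  have "mat_eq n X (mm n idm X)" by (rule mat_eq_sym[OF mm_idm_left])
  also have "mat_eq n (mm n idm X) (mm n (mm n B V) X)" by (rule mat_eq_mm[OF mat_eq_sym[OF assms(1)] mat_eq_refl])
  also have "mm n (mm n B V) X = mm n B (mm n V X)" by (rule mm_assoc)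
  also have "mat_eq n (mm n B (mm n V X)) (mm n B (\<lambda>i j. 0))" by (rule mat_eq_mm[OF mat_eq_refl assms(2)])
  also have "mm n B (\<lambda>i j. 0) = (\<lambda>i j. 0)" unfolding mm_def by simp
  finally show ?thesis .
qed

lemma cancel_right:
  fixes V B :: "nat \<Rightarrow> nat \<Rightarrow> 'r::comm_ring_1"
  assumes "mat_eq n (mm n V B) idm" "mat_eq n (mm n X V) (\<lambda>i j. 0)"
  shows "mat_eq n X (\<lambda>i j. 0)"
proof -
  have "mat_eq n X (mm n X idm)" by (rule mat_eq_sym[OF mm_idm_right])
  also have "mat_eq n (mm n X idm) (mm n X (mm n V B))" by (rule mat_eq_mm[OF mat_eq_refl mat_eq_sym[OF assms(1)]])
  also have "mm n X (mm n V B) = mm n (mm n X V) B" by (rule mm_assoc[symmetric])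
  also have "mat_eq n (mm n (mm n X V) B) (mm n (\<lambda>i j. 0) B)" by (rule mat_eq_mm[OF assms(2) mat_eq_refl])
  also have "mm n (\<lambda>i j. 0) B = (\<lambda>i j. 0)" unfolding mm_def by simp
  finally show ?thesis .
qed

lemma shift_zero:
  fixes Z :: "nat \<Rightarrow> bool"
  assumes ev: "\<And>m. N \<le> m \<Longrightarrow> Z m"
    and down: "\<And>m. hi < m \<Longrightarrow> Z m \<Longrightarrow> Z (m - 1)"
    and up: "\<And>m. m < lo \<Longrightarrow> (m = 0 \<or> Z (m - 1)) \<Longrightarrow> Z m"
  shows "m < lo \<or> hi \<le> m \<Longrightarrow> Z m"
proof -
  have D: "\<And>m. hi \<le> m \<Longrightarrow> N \<le> m + d \<Longrightarrow> Z m" for d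
  proof (induction d)
    case 0 then show ?case using ev by simp
  next
    case (Suc d)
    show ?case
    proof (cases "N \<le> m + d")
      case True then show ?thesis using Suc by blast
    next
      case False
      then have "Z (Suc m)" using Suc by simp
      then show ?thesis using down[of "Suc m"] Suc.prems by simp
    qed
  qed
  have U: "m < lo \<Longrightarrow> Z m" for m
  proof (induction m)
    case 0 then show ?case using up by simp
  next
    case (Suc m) then show ?case using up[of "Suc m"] by simp
  qed
  assume "m < lo \<or> hi \<le> m"
  then show "Z m"
  proof
    assume "m < lo" then show ?thesis by (rule U)
  next
    assume "hi \<le> m" then show ?thesis using D[of m N] by simp
  qed
qed


context module begin

lemma comb_inv:
  assumes inv: "mat_eq n (mm n V B) idm"
    and y: "\<And>j. j < n \<Longrightarrow> y j = (\<Sum>i<n. V i j *s x i)"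
    and m: "m < n"
  shows "x m = (\<Sum>j<n. B j m *s y j)"
proof -
  have "(\<Sum>j<n. B j m *s y j) = (\<Sum>j<n. \<Sum>i<n. (V i j * B j m) *s x i)"
    using y by (simp add: scale_sum_right mult.commute)
  also have "\<dots> = (\<Sum>i<n. \<Sum>j<n. (V i j * B j m) *s x i)" by (rule sum.swap)
  also have "\<dots> = (\<Sum>i<n. (mm n V B i m) *s x i)"
    by (simp add: mm_def scale_sum_left)
  also have "\<dots> = (\<Sum>i<n. (if i = m then 1 else 0) *s x i)"
    using inv m by (intro sum.cong) (auto simp: mat_eq_def idm_def)
  also have "\<dots> = x m" using m by (simp add: if_distrib[of "\<lambda>c. c *s _"] cong: if_cong)
  finally show ?thesis by simp
qed

end

lemma poly_act_const: "poly_act sc tau [:c:] x = sc c x"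
  by (simp add: poly_act_def)

lemma poly_act_lin:
  assumes "vector_space sc"
  shows "poly_act sc tau [:a, b:] x = sc a x + sc b (tau x)"
proof -
  interpret vector_space sc by fact
  show ?thesis
  proof (cases "b = 0")
    case True then show ?thesis by (simp add: poly_act_def)
  next
    case False
    then have "degree [:a, b:] = 1" by simp
    then show ?thesis by (simp add: poly_act_def)
  qed
qed


lemma vec_cancel_left:
  fixes V B :: "nat \<Rightarrow> nat \<Rightarrow> 'r::comm_ring_1"
  assumes "mat_eq n (mm n B V) idm" "\<And>i. i < n \<Longrightarrow> (\<Sum>j<n. V i j * x j) = 0" "l < n"
  shows "x l = 0"
proof -
  have "mat_eq n (mm n V (\<lambda>i _. x i)) (\<lambda>i j. 0)"
    using assms(2) by (simp add: mat_eq_def mm_def)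
  from cancel_left[OF assms(1) this] assms(3) show ?thesis by (auto simp: mat_eq_def)
qed

lemma vec_cancel_left_tr:
  fixes V B :: "nat \<Rightarrow> nat \<Rightarrow> 'r::comm_ring_1"
  assumes "mat_eq n (mm n V B) idm" "\<And>i. i < n \<Longrightarrow> (\<Sum>j<n. V j i * x j) = 0" "l < n"
  shows "x l = 0"
proof -
  have "mat_eq n (tr (mm n V B)) (tr idm)" by (rule mat_eq_tr[OF assms(1)])
  then have "mat_eq n (mm n (tr B) (tr V)) idm" by (simp add: tr_mm)
  then show ?thesis by (rule vec_cancel_left) (use assms in \<open>auto simp: tr_def\<close>)
qed

lemma coeff_mult_lin:
  "coeff (p * [:x, y:]) m = x * coeff p m + (if m = 0 then 0 else y * coeff p (m - 1))"
proof -
  have "p * [:x, y:] = smult x p + pCons 0 (smult y p)"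
    by (simp add: mult.commute[of p] mult_pCons_left)
  then show ?thesis by (cases m) (auto simp: coeff_pCons)
qed

lemma inv_obtain:
  assumes "mat_invertible n V"
  obtains B where "mat_eq n (mm n V B) idm" "mat_eq n (mm n B V) idm"
  using assms unfolding mat_invertible_def mat_mult_mm idm_def by blast

lemma fam_indep:
  assumes gen: "assoc_generators g V sc tau phi b" and inv: "mat_invertible (2*g) V"
    and sum0: "(\<Sum>i<2*g. sc (c i) (b i)) = 0" and l: "l < 2*g"
  shows "c l = 0"
proof -
  define n where "n = 2*g"
  obtain B where VB: "mat_eq n (mm n V B) idm" and BV: "mat_eq n (mm n B V) idm"
    using inv_obtain[OF inv] n_def by blast
  have "\<exists>(q :: nat \<Rightarrow> rat poly) k. \<forall>i<n. monom 1 k * [:c i:] = (\<Sum>j<n. q j * pres_mat V i j)"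
  proof -
    have pres: "\<forall>p :: nat \<Rightarrow> rat poly. (\<Sum>i<2*g. poly_act sc tau (p i) (b i)) = 0 \<longrightarrow>
        (\<exists>(q :: nat \<Rightarrow> rat poly) k. \<forall>i<2*g. monom 1 k * p i = (\<Sum>j<2*g. q j * pres_mat V i j))"
      using gen unfolding assoc_generators_def by blast
    have "(\<Sum>i<2*g. poly_act sc tau [:c i:] (b i)) = 0" using sum0 by (simp add: poly_act_const)
    then show ?thesis using pres[rule_format, of "\<lambda>i. [:c i:]"] unfolding n_def by blast
  qed
  then obtain q k where qk: "\<And>i. i < n \<Longrightarrow> monom 1 k * [:c i:] = (\<Sum>j<n. q j * pres_mat V i j)"
    by blast
  define a where "a m j = coeff (q j) m" for m j
  have E: "(if m = k then c i else 0) = (\<Sum>j<n. (- V j i) * a m j) + (if m = 0 then 0 else \<Sum>j<n. V i j * a (m-1) j)"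
    if i: "i < n" for i m
  proof -
    have h1: "coeff (monom 1 k * [:c i:]) m = (if m = k then c i else 0)"
      by (simp add: coeff_monom_mult mult.commute[of "monom 1 k"] smult_monom coeff_monom)
    moreover have h2: "coeff (\<Sum>j<n. q j * pres_mat V i j) m =
       (\<Sum>j<n. (- V j i) * a m j) + (if m = 0 then 0 else \<Sum>j<n. V i j * a (m-1) j)"
    proof -
      have "coeff (q j * pres_mat V i j) m = (- V j i) * a m j + (if m = 0 then 0 else V i j * a (m-1) j)" for j
        by (simp only: pres_mat_def coeff_mult_lin a_def)
      then show ?thesis by (simp add: coeff_sum sum.distrib sum_subtractf sum_negf)
    qed
    moreover have h3: "coeff (monom 1 k * [:c i:]) m = coeff (\<Sum>j<n. q j * pres_mat V i j) m"
      using qk[OF i] by (rule arg_cong)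
    ultimately show ?thesis by metis
  qed
  define Z where "Z m \<longleftrightarrow> (\<forall>j<n. a m j = 0)" for m
  define N where "N = Suc (\<Sum>j<n. degree (q j))"
  have Zall: "m < k \<or> k \<le> m \<Longrightarrow> Z m" for m
  proof (rule shift_zero[where N = N and hi = k and lo = k])
    fix m assume "N \<le> m"
    then show "Z m" unfolding Z_def a_def
    proof (intro allI impI coeff_eq_0)
      fix j assume "N \<le> m" "j < n"
      have "degree (q j) \<le> (\<Sum>j<n. degree (q j))"
        using \<open>j < n\<close> by (intro member_le_sum) auto
      then show "degree (q j) < m" using \<open>N \<le> m\<close> unfolding N_def by simp
    qed
  next
    fix m assume km: "k < m" and Zm: "Z m"
    have "(\<Sum>j<n. V i j * a (m-1) j) = 0" if "i < n" for i
      using E[OF that, of m] km Zm by (simp add: Z_def)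
    then show "Z (m - 1)" unfolding Z_def using vec_cancel_left[OF BV] by blast
  next
    fix m assume mk: "m < k" and pre: "m = 0 \<or> Z (m - 1)"
    have "(\<Sum>j<n. V j i * a m j) = 0" if "i < n" for i
    proof -
      have "0 = (\<Sum>j<n. (- V j i) * a m j)"
        using E[OF that, of m] mk pre by (cases m) (auto simp: Z_def)
      then show ?thesis by (simp add: sum_negf)
    qed
    then show "Z m" unfolding Z_def using vec_cancel_left_tr[OF VB] by blast
  qed
  have ln: "l < n" using l n_def by simp
  have "Z k" using Zall by simp
  moreover have "k = 0 \<or> Z (k - 1)" using Zall[of "k-1"] by (cases k) auto
  ultimately show ?thesis using E[OF ln, of k] by (auto simp: Z_def)
qed


lemma fam_span:
  assumes lm: "laurent_module sc tau" and gen: "assoc_generators g V sc tau phi b"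
    and inv: "mat_invertible (2*g) V"
  shows "module.span sc (b ` {..<2*g}) = UNIV"
proof -
  define n where "n = 2*g"
  interpret vs: vector_space sc using lm unfolding laurent_module_def by blast
  have hom: "module_hom sc sc tau" using lm unfolding laurent_module_def linear_iff_module_hom by blast
  have bij: "bij tau" using lm unfolding laurent_module_def by blast
  interpret mp: module_pair sc sc by unfold_locales
  have homi: "module_hom sc sc (inv tau)" by (rule mp.bij_module_hom_imp_inv_module_hom[OF hom bij])
  obtain B where VB: "mat_eq n (mm n V B) idm" and BV: "mat_eq n (mm n B V) idm"
    using inv_obtain[OF inv] n_def by blast
  define S where "S = vs.span (b ` {..<n})"
  have bS: "i < n \<Longrightarrow> b i \<in> S" for i unfolding S_def by (intro vs.span_base) auto
  have rel0: "\<forall>j<n. (\<Sum>i<n. poly_act sc tau (pres_mat V i j) (b i)) = 0"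
    using gen unfolding assoc_generators_def n_def by blast
  have rel: "(\<Sum>i<n. sc (V i j) (tau (b i))) = (\<Sum>i<n. sc (V j i) (b i))" if j: "j < n" for j
  proof -
    have "0 = (\<Sum>i<n. sc (- V j i) (b i) + sc (V i j) (tau (b i)))"
      using rel0 j by (simp add: pres_mat_def poly_act_lin[OF vs.vector_space_axioms])
    also have "\<dots> = - (\<Sum>i<n. sc (V j i) (b i)) + (\<Sum>i<n. sc (V i j) (tau (b i)))"
      by (simp add: sum.distrib sum_negf sum_subtractf)
    finally show ?thesis by (simp add: eq_neg_iff_add_eq_0 add.commute)
  qed
  have tauS: "tau (b m) \<in> S" if m: "m < n" for m
  proof -
    have "tau (b m) = (\<Sum>j<n. sc (B j m) (\<Sum>i<n. sc (V j i) (b i)))"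
      by (rule vs.comb_inv[OF VB _ m, where x = "\<lambda>i. tau (b i)"]) (simp add: rel)
    also have "\<dots> \<in> S" unfolding S_def
      by (intro vs.span_sum vs.span_scale) (auto intro!: vs.span_base)
    finally show ?thesis .
  qed
  have invS: "inv tau (b m) \<in> S" if m: "m < n" for m
  proof -
    have r2: "(\<Sum>i<n. sc (V i j) (b i)) = (\<Sum>i<n. sc (tr V i j) (inv tau (b i)))" if j: "j < n" for j
    proof -
      have "(\<Sum>i<n. sc (V i j) (b i)) = inv tau (\<Sum>i<n. sc (V i j) (tau (b i)))"
        using bij by (simp add: module_hom.sum[OF homi] module_hom.scale[OF homi] bij_is_inj inv_f_f)
      also have "\<dots> = inv tau (\<Sum>i<n. sc (V j i) (b i))" using rel[OF j] by simp
      also have "\<dots> = (\<Sum>i<n. sc (tr V i j) (inv tau (b i)))"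
        by (simp add: module_hom.sum[OF homi] module_hom.scale[OF homi] tr_def)
      finally show ?thesis .
    qed
    have TV: "mat_eq n (mm n (tr V) (tr B)) idm"
      using mat_eq_tr[OF BV] by (simp add: tr_mm)
    have "inv tau (b m) = (\<Sum>j<n. sc (tr B j m) (\<Sum>i<n. sc (V i j) (b i)))"
      by (rule vs.comb_inv[OF TV _ m, where x = "\<lambda>i. inv tau (b i)"]) (simp add: r2)
    also have "\<dots> \<in> S" unfolding S_def
      by (intro vs.span_sum vs.span_scale) (auto intro!: vs.span_base)
    finally show ?thesis .
  qed
  have clos1: "tau x \<in> S" if "x \<in> S" for x
  proof -
    have "tau ` S = vs.span (tau ` b ` {..<n})"
      unfolding S_def by (rule module_hom.span_image[OF hom, symmetric])
    also have "\<dots> \<subseteq> S" unfolding S_def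
      by (rule vs.span_minimal) (use tauS in \<open>auto simp: S_def\<close>)
    finally show ?thesis using that by blast
  qed
  have clos2: "inv tau x \<in> S" if "x \<in> S" for x
  proof -
    have "inv tau ` S = vs.span (inv tau ` b ` {..<n})"
      unfolding S_def by (rule module_hom.span_image[OF homi, symmetric])
    also have "\<dots> \<subseteq> S" unfolding S_def
      by (rule vs.span_minimal) (use invS in \<open>auto simp: S_def\<close>)
    finally show ?thesis using that by blast
  qed
  have it1: "(tau ^^ k) x \<in> S" if "x \<in> S" for x k
    using that by (induction k) (auto intro: clos1)
  have it2: "(inv tau ^^ k) x \<in> S" if "x \<in> S" for x k
    using that by (induction k) (auto intro: clos2)
  have spanU: "vs.span ({(tau ^^ k) (b i) | k i. i < n} \<union> {(inv tau ^^ k) (b i) | k i. i < n}) = UNIV"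
    using gen unfolding assoc_generators_def n_def by blast
  have "vs.span ({(tau ^^ k) (b i) | k i. i < n} \<union> {(inv tau ^^ k) (b i) | k i. i < n}) \<subseteq> S"
    unfolding S_def by (rule vs.span_minimal) (use it1 it2 bS in \<open>auto simp: S_def\<close>)
  then show ?thesis using spanU S_def n_def by auto
qed

lemma fam_inj:
  assumes lm: "laurent_module sc tau" and gen: "assoc_generators g V sc tau phi b"
    and inv: "mat_invertible (2*g) V"
  shows "inj_on b {..<2*g}"
proof (rule inj_onI, rule ccontr)
  interpret vs: vector_space sc using lm unfolding laurent_module_def by blast
  fix i j assume i: "i \<in> {..<2*g}" and j: "j \<in> {..<2*g}" and eq: "b i = b j" and ne: "i \<noteq> j"
  define c where "c l = (if l = i then 1 else if l = j then -1 else (0::rat))" for l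
  have pt: "sc (c l) (b l) = (if l = i then b i else 0) + (if l = j then - b j else 0)" for l
    using ne by (auto simp: c_def)
  have "(\<Sum>l<2*g. sc (c l) (b l)) = b i - b j"
    using i j by (simp add: pt sum.distrib)
  also have "\<dots> = 0" using eq by simp
  finally have "c i = 0" using fam_indep[OF gen inv, of c i] i by simp
  then show False by (simp add: c_def)
qed

lemma fam_repr:
  assumes lm: "laurent_module sc tau" and gen: "assoc_generators g V sc tau phi b"
    and inv: "mat_invertible (2*g) V"
  shows "\<exists>c. x = (\<Sum>i<2*g. sc (c i) (b i))"
proof -
  interpret vs: vector_space sc using lm unfolding laurent_module_def by blast
  have "x \<in> vs.span (b ` {..<2*g})" using fam_span[OF lm gen inv] by simp
  then obtain u where "x = (\<Sum>v\<in>b ` {..<2*g}. sc (u v) v)"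
    using vs.span_finite[of "b ` {..<2*g}"] by auto
  also have "\<dots> = (\<Sum>i<2*g. sc (u (b i)) (b i))"
    by (rule sum.reindex[OF fam_inj[OF lm gen inv], unfolded comp_def])
  finally show ?thesis by (intro exI[of _ "\<lambda>i. u (b i)"])
qed

lemma fam_basis:
  assumes lm: "laurent_module sc tau" and gen: "assoc_generators g V sc tau phi b"
    and inv: "mat_invertible (2*g) V"
  shows "is_family_basis (2*g) sc b"
proof -
  interpret vs: vector_space sc using lm unfolding laurent_module_def by blast
  have inj: "inj_on b {..<2*g}" by (rule fam_inj[OF lm gen inv])
  have "\<not> vs.dependent (b ` {..<2*g})"
  proof
    assume "vs.dependent (b ` {..<2*g})"
    then obtain u where u: "\<exists>v\<in>b ` {..<2*g}. u v \<noteq> 0" "(\<Sum>v\<in>b ` {..<2*g}. sc (u v) v) = 0"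
      using vs.dependent_finite[of "b ` {..<2*g}"] by auto
    have "(\<Sum>i<2*g. sc (u (b i)) (b i)) = 0"
      using u(2) sum.reindex[OF inj, of "\<lambda>v. sc (u v) v"] by simp
    then have "\<forall>i<2*g. u (b i) = 0" using fam_indep[OF gen inv, of "\<lambda>i. u (b i)"] by blast
    then show False using u(1) by auto
  qed
  then show ?thesis unfolding is_family_basis_def using inj fam_span[OF lm gen inv] by blast
qed


lemma form_zero_left:
  assumes "blanchfield_type_form sc tau phi"
  shows "laurent (phi 0 y)"
proof -
  have "mod_laurent (phi (0 + 0) y) (phi 0 y + phi 0 y)"
    using assms unfolding blanchfield_type_form_def by blast
  then have "laurent (- phi 0 y)" by (simp add: mod_laurent_def)
  then show ?thesis using laurent_minus by fastforce
qed

lemma form_zero_right: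
  assumes "blanchfield_type_form sc tau phi"
  shows "laurent (phi y 0)"
proof -
  have "mod_laurent (phi y (0 + 0)) (phi y 0 + phi y 0)"
    using assms unfolding blanchfield_type_form_def by blast
  then have "laurent (- phi y 0)" by (simp add: mod_laurent_def)
  then show ?thesis using laurent_minus by fastforce
qed

lemma form_sum_left:
  assumes F: "blanchfield_type_form sc tau phi" and fin: "finite A"
  shows "mod_laurent (phi (\<Sum>l\<in>A. sc (c l) (x l)) y) (\<Sum>l\<in>A. pf [:c l:] * phi (x l) y)"
  using fin
proof (induction A rule: finite_induct)
  case empty
  then show ?case using form_zero_left[OF F] by (simp add: mod_laurent_def)
next
  case (insert a A)
  have "mod_laurent (phi (sc (c a) (x a) + (\<Sum>l\<in>A. sc (c l) (x l))) y)
          (phi (sc (c a) (x a)) y + phi (\<Sum>l\<in>A. sc (c l) (x l)) y)"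
    using F unfolding blanchfield_type_form_def by blast
  moreover have "mod_laurent (phi (sc (c a) (x a)) y + phi (\<Sum>l\<in>A. sc (c l) (x l)) y)
     (pf [:c a:] * phi (x a) y + (\<Sum>l\<in>A. pf [:c l:] * phi (x l) y))"
  proof (rule ml_add)
    show "mod_laurent (phi (sc (c a) (x a)) y) (pf [:c a:] * phi (x a) y)"
      using F unfolding blanchfield_type_form_def by blast
  qed (rule insert.IH)
  ultimately show ?case using insert.hyps by (simp add: ml_trans)
qed

lemma form_sum_right:
  assumes F: "blanchfield_type_form sc tau phi" and fin: "finite A"
  shows "mod_laurent (phi y (\<Sum>l\<in>A. sc (c l) (x l))) (\<Sum>l\<in>A. pf [:c l:] * phi y (x l))"
  using fin
proof (induction A rule: finite_induct)
  case empty
  then show ?case using form_zero_right[OF F] by (simp add: mod_laurent_def)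
next
  case (insert a A)
  have "mod_laurent (phi y (sc (c a) (x a) + (\<Sum>l\<in>A. sc (c l) (x l))))
          (phi y (sc (c a) (x a)) + phi y (\<Sum>l\<in>A. sc (c l) (x l)))"
    using F unfolding blanchfield_type_form_def by blast
  moreover have "mod_laurent (phi y (sc (c a) (x a)) + phi y (\<Sum>l\<in>A. sc (c l) (x l)))
     (pf [:c a:] * phi y (x a) + (\<Sum>l\<in>A. pf [:c l:] * phi y (x l)))"
  proof (rule ml_add)
    show "mod_laurent (phi y (sc (c a) (x a))) (pf [:c a:] * phi y (x a))"
      using F unfolding blanchfield_type_form_def by blast
  qed (rule insert.IH)
  ultimately show ?case using insert.hyps by (simp add: ml_trans)
qed

context module begin

lemma comb_compose:
  assumes x: "\<And>k. k < n \<Longrightarrow> x k = (\<Sum>j<n. Q j k *s y j)"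
    and y: "\<And>j. j < n \<Longrightarrow> y j = (\<Sum>l<n. P l j *s x l)"
    and k: "k < n"
  shows "x k = (\<Sum>l<n. mm n P Q l k *s x l)"
proof -
  have "x k = (\<Sum>j<n. Q j k *s (\<Sum>l<n. P l j *s x l))" using x[OF k] y by simp
  also have "\<dots> = (\<Sum>j<n. \<Sum>l<n. (P l j * Q j k) *s x l)"
    by (simp add: scale_sum_right mult.commute)
  also have "\<dots> = (\<Sum>l<n. \<Sum>j<n. (P l j * Q j k) *s x l)" by (rule sum.swap)
  also have "\<dots> = (\<Sum>l<n. mm n P Q l k *s x l)" by (simp add: mm_def scale_sum_left)
  finally show ?thesis .
qed

lemma indep_id:
  assumes ind: "\<And>c l. (\<Sum>i<n. c i *s x i) = 0 \<Longrightarrow> l < n \<Longrightarrow> c l = 0"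
    and R: "\<And>k. k < n \<Longrightarrow> x k = (\<Sum>l<n. R l k *s x l)"
  shows "mat_eq n R idm"
  unfolding mat_eq_def
proof (intro allI impI)
  fix l k assume l: "l < n" and k: "k < n"
  have "(\<Sum>i<n. (R i k - idm i k) *s x i) = (\<Sum>i<n. R i k *s x i) - (\<Sum>i<n. idm i k *s x i)"
    by (simp add: scale_left_diff_distrib sum_subtractf)
  also have "(\<Sum>i<n. idm i k *s x i) = x k"
    using k by (simp add: idm_def if_distrib[of "\<lambda>c. c *s _"] cong: if_cong)
  finally have "(\<Sum>i<n. (R i k - idm i k) *s x i) = 0" using R[OF k] by simp
  from ind[OF this l] show "R l k = idm l k" by simp
qed

end


definition cm :: "(nat \<Rightarrow> nat \<Rightarrow> rat poly) \<Rightarrow> nat \<Rightarrow> nat \<Rightarrow> nat \<Rightarrow> rat" where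
  "cm X m = (\<lambda>i j. coeff (X i j) m)"

definition linm :: "(nat \<Rightarrow> nat \<Rightarrow> rat) \<Rightarrow> (nat \<Rightarrow> nat \<Rightarrow> rat) \<Rightarrow> nat \<Rightarrow> nat \<Rightarrow> rat poly" where
  "linm b a = (\<lambda>i j. [:b i j, a i j:])"

lemma cm_mm_lin_left:
  "cm (mm n (linm b a) X) m = (\<lambda>i j. mm n b (cm X m) i j + (if m = 0 then 0 else mm n a (cm X (m-1)) i j))"
proof (intro ext)
  fix i j
  have "coeff (linm b a i k * X k j) m = b i k * coeff (X k j) m + (if m = 0 then 0 else a i k * coeff (X k j) (m-1))" for k
    unfolding linm_def by (simp only: mult.commute[of "[:_, _:]"] coeff_mult_lin)
  then show "cm (mm n (linm b a) X) m i j = mm n b (cm X m) i j + (if m = 0 then 0 else mm n a (cm X (m-1)) i j)"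
    by (simp add: cm_def mm_def coeff_sum sum.distrib)
qed

lemma cm_mm_lin_right:
  "cm (mm n X (linm b a)) m = (\<lambda>i j. mm n (cm X m) b i j + (if m = 0 then 0 else mm n (cm X (m-1)) a i j))"
proof (intro ext)
  fix i j
  have "coeff (X i k * linm b a k j) m = coeff (X i k) m * b k j + (if m = 0 then 0 else coeff (X i k) (m-1) * a k j)" for k
    unfolding linm_def by (simp only: coeff_mult_lin) (simp add: mult.commute)
  then show "cm (mm n X (linm b a)) m i j = mm n (cm X m) b i j + (if m = 0 then 0 else mm n (cm X (m-1)) a i j)"
    by (simp add: cm_def mm_def coeff_sum sum.distrib)
qed

lemma cm_mm_const_right:
  "cm (mm n X (\<lambda>i j. [:Q i j:])) m = mm n (cm X m) Q"
  by (intro ext) (simp add: cm_def mm_def coeff_sum mult.commute)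

lemma mm_neg_left: "mm n (\<lambda>i j. - A i j) B = (\<lambda>i j. - mm n A B i j)"
  unfolding mm_def by (simp add: sum_negf)
lemma mm_neg_right: "mm n B (\<lambda>i j. - A i j) = (\<lambda>i j. - mm n B A i j)"
  unfolding mm_def by (simp add: sum_negf)
lemma mm_zero_left: "mm n (\<lambda>i j. 0) B = (\<lambda>i j. 0)" unfolding mm_def by simp
lemma mm_zero_right: "mm n B (\<lambda>i j. 0) = (\<lambda>i j. 0)" unfolding mm_def by simp

lemma mat_eq_mm_zero_left: "mat_eq n A (\<lambda>i j. 0) \<Longrightarrow> mat_eq n (mm n A B) (\<lambda>i j. 0)"
  using mat_eq_mm[of n A "\<lambda>i j. 0" B B] by (simp add: mm_zero_left)
lemma mat_eq_mm_zero_right: "mat_eq n A (\<lambda>i j. 0) \<Longrightarrow> mat_eq n (mm n B A) (\<lambda>i j. 0)"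
  using mat_eq_mm[of n B B A "\<lambda>i j. 0"] by (simp add: mm_zero_right)


lemma cm_mm_const_left:
  "cm (mm n (\<lambda>i j. [:Q i j:]) X) m = mm n Q (cm X m)"
  by (intro ext) (simp add: cm_def mm_def coeff_sum)

lemma coeff_H: "coeff ([:1, -1:] * (r::rat poly)) m = coeff r m + (if m = 0 then 0 else - coeff r (m - 1))"
  by (simp only: mult.commute[of "[:_, _:]"] coeff_mult_lin) simp

lemma deg_const_lin: "degree (mm n (\<lambda>i j. [:Q i j:]) (linm b a) i j) \<le> 1"
  unfolding mm_def linm_def
proof (rule degree_sum_le)
  fix k show "degree ([:Q i k:] * [:b k j, a k j:]) \<le> 1"
    using degree_mult_le[of "[:Q i k:]" "[:b k j, a k j:]"] by simp
qed simp

lemma deg_lin_const: "degree (mm n (linm b a) (\<lambda>i j. [:Q i j:]) i j) \<le> 1"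
  unfolding mm_def linm_def
proof (rule degree_sum_le)
  fix k show "degree ([:b i k, a i k:] * [:Q k j:]) \<le> 1"
    using degree_mult_le[of "[:b i k, a i k:]" "[:Q k j:]"] by simp
qed simp

lemma cm_linm0: "cm (linm b a) 0 = b" by (intro ext) (simp add: cm_def linm_def)
lemma cm_const0: "cm (\<lambda>i j. [:Q i j:]) 0 = Q" by (intro ext) (simp add: cm_def)

lemma core:
  fixes V V' P Q B B' Jl Jr :: "nat \<Rightarrow> nat \<Rightarrow> rat" and L :: "nat \<Rightarrow> nat \<Rightarrow> rat poly"
  assumes VB: "mat_eq n (mm n V B) idm" and BV: "mat_eq n (mm n B V) idm"
    and VB': "mat_eq n (mm n V' B') idm" and BV': "mat_eq n (mm n B' V') idm"
    and JL: "mat_eq n (mm n Jl (\<lambda>i j. V i j - V j i)) idm"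
    and JR: "mat_eq n (mm n (\<lambda>i j. V' i j - V' j i) Jr) idm"
    and Mt_def: "Mt = linm (\<lambda>i j. - V i j) (tr V)"
    and Mt'_def: "Mt' = linm (\<lambda>i j. - V' i j) (tr V')"
    and Qp_def: "Qp = (\<lambda>i j. [:Q i j:])" and Pp_def: "Pp = (\<lambda>i j. [:P i j:])"
    and eq: "\<And>i j. i < n \<Longrightarrow> j < n \<Longrightarrow>
       monom 1 K * ([:1, -1:] * (mm n Qp Mt' i j - mm n Mt (tr Pp) i j)) = mm n (mm n Mt (mm n L Qp)) Mt' i j"
  shows "mat_eq n (mm n Q V') (mm n V (tr P))"
proof -
  define r where "r i j = mm n Qp Mt' i j - mm n Mt (tr Pp) i j" for i j
  define X where "X = mm n L Qp"
  define Y where "Y = mm n Mt X"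
  define Zp where "Zp = mm n Y Mt'"
  have trPp: "tr Pp = (\<lambda>i j. [:tr P i j:])" unfolding Pp_def tr_def by simp
  have degr: "degree (r i j) \<le> 1" for i j
    unfolding r_def Mt'_def Mt_def Qp_def trPp by (intro degree_diff_le deg_const_lin deg_lin_const)
  have cr: "coeff (r i j) m = 0" if "m \<ge> 2" for i j m
    using degr[of i j] that by (intro coeff_eq_0) simp
  have cX: "cm X m = mm n (cm L m) Q" for m unfolding X_def Qp_def by (rule cm_mm_const_right)
  have cY: "cm Y m = (\<lambda>i j. mm n (\<lambda>i j. - V i j) (cm X m) i j + (if m = 0 then 0 else mm n (tr V) (cm X (m-1)) i j))" for m
    unfolding Y_def Mt_def by (rule cm_mm_lin_left)
  have cZ: "cm Zp m = (\<lambda>i j. mm n (cm Y m) (\<lambda>i j. - V' i j) i j + (if m = 0 then 0 else mm n (cm Y (m-1)) (tr V') i j))" for m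
    unfolding Zp_def Mt'_def by (rule cm_mm_lin_right)
  have cZH: "cm Zp m i j = (if m < K then 0 else coeff (r i j) (m - K) + (if m - K = 0 then 0 else - coeff (r i j) (m - K - 1)))"
    if "i < n" "j < n" for m i j
  proof -
    have "cm Zp m i j = coeff (monom 1 K * ([:1, -1:] * r i j)) m"
      using eq[OF that] unfolding cm_def Zp_def Y_def X_def r_def by simp
    then show ?thesis by (simp only: coeff_monom_mult coeff_H) simp
  qed
  define N where "N = Suc (\<Sum>i<n. \<Sum>j<n. degree (L i j))"
  have Xev: "mat_eq n (cm X m) (\<lambda>i j. 0)" if "N \<le> m" for m
  proof -
    have "mat_eq n (cm L m) (\<lambda>i j. 0)" unfolding mat_eq_def cm_def
    proof (intro allI impI coeff_eq_0)
      fix i j assume ij: "i < n" "j < n"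
      have "degree (L i j) \<le> (\<Sum>j<n. degree (L i j))" using ij by (intro member_le_sum) auto
      also have "\<dots> \<le> (\<Sum>i<n. \<Sum>j<n. degree (L i j))" using ij
        by (intro member_le_sum[where f = "\<lambda>i. \<Sum>j<n. degree (L i j)"]) auto
      finally show "degree (L i j) < m" using that unfolding N_def by simp
    qed
    then show ?thesis unfolding cX by (rule mat_eq_mm_zero_left)
  qed
  have ZY: "mat_eq n (cm Y m) (\<lambda>i j. 0)" if "m < K \<or> K + 2 \<le> m" for m
  proof (rule shift_zero[where N = "Suc N" and hi = "K+2" and lo = K and Z = "\<lambda>m. mat_eq n (cm Y m) (\<lambda>i j. 0)", OF _ _ _ that])
    fix m assume m: "Suc N \<le> m"
    have a: "mat_eq n (cm X m) (\<lambda>i j. 0)" using Xev m by simp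
    have b: "mat_eq n (cm X (m-1)) (\<lambda>i j. 0)" using Xev m by simp
    show "mat_eq n (cm Y m) (\<lambda>i j. 0)" unfolding cY
      using mat_eq_mm_zero_right[OF a, of "\<lambda>i j. - V i j"] mat_eq_mm_zero_right[OF b, of "tr V"]
      by (auto simp: mat_eq_def)
  next
    fix m assume m: "K + 2 < m" and Ym: "mat_eq n (cm Y m) (\<lambda>i j. 0)"
    have "mat_eq n (mm n (cm Y (m-1)) (tr V')) (\<lambda>i j. 0)"
    proof -
      have "mat_eq n (cm Zp m) (\<lambda>i j. 0)" using cZH cr m by (auto simp: mat_eq_def)
      moreover have "mat_eq n (mm n (cm Y m) (\<lambda>i j. - V' i j)) (\<lambda>i j. 0)"
        using mat_eq_mm_zero_left[OF Ym] by (simp add:)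
      ultimately show ?thesis using m unfolding cZ by (auto simp: mat_eq_def)
    qed
    moreover have "mat_eq n (mm n (tr V') (tr B')) idm"
      using mat_eq_tr[OF BV'] by (simp add: tr_mm)
    ultimately show "mat_eq n (cm Y (m - 1)) (\<lambda>i j. 0)" by (metis cancel_right)
  next
    fix m assume m: "m < K" and pre: "m = 0 \<or> mat_eq n (cm Y (m - 1)) (\<lambda>i j. 0)"
    have "mat_eq n (mm n (cm Y m) V') (\<lambda>i j. 0)"
    proof -
      have "mat_eq n (cm Zp m) (\<lambda>i j. 0)" using cZH m by (auto simp: mat_eq_def)
      moreover have "m \<noteq> 0 \<Longrightarrow> mat_eq n (mm n (cm Y (m-1)) (tr V')) (\<lambda>i j. 0)"
        using pre mat_eq_mm_zero_left[of n "cm Y (m-1)"] by auto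
      ultimately show ?thesis unfolding cZ by (cases m) (auto simp: mat_eq_def mm_neg_right)
    qed
    then show "mat_eq n (cm Y m) (\<lambda>i j. 0)" by (rule cancel_right[OF VB'])
  qed
  have ZX: "mat_eq n (cm X m) (\<lambda>i j. 0)" if "m < K \<or> K + 1 \<le> m" for m
  proof (rule shift_zero[where N = N and hi = "K+1" and lo = K and Z = "\<lambda>m. mat_eq n (cm X m) (\<lambda>i j. 0)", OF _ _ _ that])
    fix m assume "N \<le> m" then show "mat_eq n (cm X m) (\<lambda>i j. 0)" by (rule Xev)
  next
    fix m assume m: "K + 1 < m" and Xm: "mat_eq n (cm X m) (\<lambda>i j. 0)"
    have "mat_eq n (mm n (tr V) (cm X (m-1))) (\<lambda>i j. 0)"
    proof -
      have "mat_eq n (cm Y m) (\<lambda>i j. 0)" using ZY m by simp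
      moreover have "mat_eq n (mm n (\<lambda>i j. - V i j) (cm X m)) (\<lambda>i j. 0)"
        using mat_eq_mm_zero_right[OF Xm] by (simp add:)
      ultimately show ?thesis using m unfolding cY by (auto simp: mat_eq_def)
    qed
    moreover have "mat_eq n (mm n (tr B) (tr V)) idm"
      using mat_eq_tr[OF VB] by (simp add: tr_mm)
    ultimately show "mat_eq n (cm X (m - 1)) (\<lambda>i j. 0)" by (metis cancel_left)
  next
    fix m assume m: "m < K" and pre: "m = 0 \<or> mat_eq n (cm X (m - 1)) (\<lambda>i j. 0)"
    have "mat_eq n (mm n V (cm X m)) (\<lambda>i j. 0)"
    proof -
      have "mat_eq n (cm Y m) (\<lambda>i j. 0)" using ZY m by simp
      moreover have "m \<noteq> 0 \<Longrightarrow> mat_eq n (mm n (tr V) (cm X (m-1))) (\<lambda>i j. 0)"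
        using pre mat_eq_mm_zero_right[of n "cm X (m-1)"] by auto
      ultimately show ?thesis unfolding cY by (cases m) (auto simp: mat_eq_def mm_neg_left)
    qed
    then show "mat_eq n (cm X m) (\<lambda>i j. 0)" by (rule cancel_left[OF BV])
  qed
  define XK where "XK = cm X K"
  have XKm1: "K \<noteq> 0 \<Longrightarrow> mat_eq n (cm X (K-1)) (\<lambda>i j. 0)" using ZX by simp
  have XK1: "mat_eq n (cm X (K+1)) (\<lambda>i j. 0)" using ZX by simp
  have YK: "mat_eq n (cm Y K) (mm n (\<lambda>i j. - V i j) XK)"
    using XKm1 mat_eq_mm_zero_right[of n "cm X (K-1)" "tr V"]
    unfolding cY XK_def by (auto simp: mat_eq_def)
  have YK1: "mat_eq n (cm Y (K+1)) (mm n (tr V) XK)"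
    using mat_eq_mm_zero_right[OF XK1, of "\<lambda>i j. - V i j"]
    unfolding cY XK_def by (auto simp: mat_eq_def)
  have YKm1: "K \<noteq> 0 \<Longrightarrow> mat_eq n (cm Y (K-1)) (\<lambda>i j. 0)" using ZY by simp
  have YK2: "mat_eq n (cm Y (K+2)) (\<lambda>i j. 0)" using ZY by simp
  have ZK: "mat_eq n (cm Zp K) (mm n (cm Y K) (\<lambda>i j. - V' i j))"
    using YKm1 mat_eq_mm_zero_left[of n "cm Y (K-1)" "tr V'"]
    unfolding cZ by (auto simp: mat_eq_def)
  have ZK1: "mat_eq n (cm Zp (K+1)) (\<lambda>i j. mm n (cm Y (K+1)) (\<lambda>i j. - V' i j) i j + mm n (cm Y K) (tr V') i j)"
    unfolding cZ by (auto simp: mat_eq_def)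
  have ZK2: "mat_eq n (cm Zp (K+2)) (mm n (cm Y (K+1)) (tr V'))"
    using mat_eq_mm_zero_left[OF YK2, of "\<lambda>i j. - V' i j"]
    unfolding cZ by (auto simp: mat_eq_def)
  have sumZ: "cm Zp K i j + cm Zp (K+1) i j + cm Zp (K+2) i j = 0" if "i < n" "j < n" for i j
    using cZH[OF that, of K] cZH[OF that, of "K+1"] cZH[OF that, of "K+2"] cr[of 2 i j] by simp
  define D where "D = (\<lambda>i j. V i j - V j i)"
  define D' where "D' = (\<lambda>i j. V' i j - V' j i)"
  have prodD: "mm n (mm n D XK) D' = (\<lambda>i j. mm n (mm n (\<lambda>i j. - V i j) XK) (\<lambda>i j. - V' i j) i j
      + (mm n (mm n (tr V) XK) (\<lambda>i j. - V' i j) i j + mm n (mm n (\<lambda>i j. - V i j) XK) (tr V') i j)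
      + mm n (mm n (tr V) XK) (tr V') i j)"
  proof -
    have D1: "D = (\<lambda>i j. V i j - tr V i j)" unfolding D_def tr_def by simp
    have D2: "D' = (\<lambda>i j. V' i j - tr V' i j)" unfolding D'_def tr_def by simp
    show ?thesis unfolding D1 D2 by (simp add: mm_diff_left mm_diff_right mm_neg_left mm_neg_right algebra_simps)
  qed
  have "mat_eq n (mm n (mm n D XK) D') (\<lambda>i j. 0)"
  proof -
    have e1: "mat_eq n (mm n (cm Y K) (\<lambda>i j. - V' i j)) (mm n (mm n (\<lambda>i j. - V i j) XK) (\<lambda>i j. - V' i j))"
      by (rule mat_eq_mm[OF YK mat_eq_refl])
    have e2: "mat_eq n (mm n (cm Y (K+1)) (\<lambda>i j. - V' i j)) (mm n (mm n (tr V) XK) (\<lambda>i j. - V' i j))"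
      by (rule mat_eq_mm[OF YK1 mat_eq_refl])
    have e3: "mat_eq n (mm n (cm Y K) (tr V')) (mm n (mm n (\<lambda>i j. - V i j) XK) (tr V'))"
      by (rule mat_eq_mm[OF YK mat_eq_refl])
    have e4: "mat_eq n (mm n (cm Y (K+1)) (tr V')) (mm n (mm n (tr V) XK) (tr V'))"
      by (rule mat_eq_mm[OF YK1 mat_eq_refl])
    show ?thesis unfolding prodD mat_eq_def
    proof (intro allI impI)
      fix i j assume ij: "i < n" "j < n"
      show "mm n (mm n (\<lambda>i j. - V i j) XK) (\<lambda>i j. - V' i j) i j +
          (mm n (mm n (tr V) XK) (\<lambda>i j. - V' i j) i j + mm n (mm n (\<lambda>i j. - V i j) XK) (tr V') i j) +
          mm n (mm n (tr V) XK) (tr V') i j = 0"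
      proof -
        have z0: "cm Zp K i j = mm n (mm n (\<lambda>i j. - V i j) XK) (\<lambda>i j. - V' i j) i j"
          using ZK e1 ij unfolding mat_eq_def by simp
        have z1: "cm Zp (K+1) i j = mm n (mm n (tr V) XK) (\<lambda>i j. - V' i j) i j + mm n (mm n (\<lambda>i j. - V i j) XK) (tr V') i j"
          using ZK1 e2 e3 ij unfolding mat_eq_def by simp
        have z2: "cm Zp (K+2) i j = mm n (mm n (tr V) XK) (tr V') i j"
          using ZK2 e4 ij unfolding mat_eq_def by simp
        show ?thesis using sumZ[OF ij] unfolding z0 z1 z2 .
      qed
    qed
  qed
  then have "mat_eq n (mm n D XK) (\<lambda>i j. 0)"
    by (rule cancel_right[OF JR[folded D'_def]])
  then have XK0: "mat_eq n XK (\<lambda>i j. 0)"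
    by (rule cancel_left[OF JL[folded D_def]])
  have "mat_eq n (cm Zp K) (\<lambda>i j. 0)"
  proof -
    have "mat_eq n (cm Y K) (\<lambda>i j. 0)"
      using YK mat_eq_mm_zero_right[OF XK0, of "\<lambda>i j. - V i j"]
      by (auto simp: mat_eq_def)
    then show ?thesis using ZK mat_eq_mm_zero_left[of n "cm Y K" "\<lambda>i j. - V' i j"]
      by (auto simp: mat_eq_def)
  qed
  then have c0: "coeff (r i j) 0 = 0" if "i < n" "j < n" for i j
    using cZH[OF that, of K] that by (simp add: mat_eq_def)
  have cr0: "coeff (r i j) 0 = - mm n Q V' i j + mm n V (tr P) i j" for i j
  proof -
    have "coeff (r i j) 0 = cm (mm n Qp Mt') 0 i j - cm (mm n Mt (tr Pp)) 0 i j"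
      unfolding r_def cm_def by simp
    also have "cm (mm n Qp Mt') 0 = mm n Q (\<lambda>i j. - V' i j)"
      unfolding Qp_def cm_mm_const_left Mt'_def cm_linm0 ..
    also have "cm (mm n Mt (tr Pp)) 0 = mm n (\<lambda>i j. - V i j) (tr P)"
      unfolding Mt_def trPp cm_mm_lin_left cm_const0 by simp
    finally show ?thesis by (simp add: mm_neg_left mm_neg_right)
  qed
  show ?thesis using c0 cr0 unfolding mat_eq_def by (metis add.commute neg_eq_iff_add_eq_0)
qed


lemma fract_identity:
  fixes W Mf W' Mf' Pf Qf :: "nat \<Rightarrow> nat \<Rightarrow> 'r::comm_ring_1"
  assumes WM: "mat_eq n (mm n W Mf) idm" and MW': "mat_eq n (mm n Mf' W') idm"
    and PQ: "mat_eq n (mm n Pf Qf) idm"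
    and G_def: "G = (\<lambda>i k. c * tr W i k - c * mm n (mm n (tr Pf) (tr W')) Pf i k)"
  shows "mat_eq n (mm n (mm n (tr Mf) (mm n G Qf)) (tr Mf'))
           (\<lambda>i j. c * (mm n Qf (tr Mf') i j - mm n (tr Mf) (tr Pf) i j))"
proof -
  define R where "R = mm n (mm n (tr Pf) (tr W')) Pf"
  define T1 where "T1 = mm n (tr Mf) (tr W)"
  define T2 where "T2 = mm n (tr Mf) R"
  have G': "G = (\<lambda>i k. c * tr W i k - c * R i k)" unfolding G_def R_def ..
  have "mm n (mm n (tr Mf) (mm n G Qf)) (tr Mf') = mm n (mm n (mm n (tr Mf) G) Qf) (tr Mf')"
    by (simp add: mm_assoc)
  also have "mm n (tr Mf) G = (\<lambda>i j. c * T1 i j - c * T2 i j)"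
    unfolding G' T1_def T2_def by (simp add: mm_diff_right mm_scal_right)
  also have "mm n (mm n (\<lambda>i j. c * T1 i j - c * T2 i j) Qf) (tr Mf') =
     (\<lambda>i j. c * mm n (mm n T1 Qf) (tr Mf') i j - c * mm n (mm n T2 Qf) (tr Mf') i j)"
    by (simp add: mm_diff_left mm_scal_left)
  finally have e0: "mm n (mm n (tr Mf) (mm n G Qf)) (tr Mf') =
     (\<lambda>i j. c * mm n (mm n T1 Qf) (tr Mf') i j - c * mm n (mm n T2 Qf) (tr Mf') i j)" .
  have e1: "mat_eq n (mm n (mm n T1 Qf) (tr Mf')) (mm n Qf (tr Mf'))"
  proof -
    have "mat_eq n T1 idm" unfolding T1_def using mat_eq_tr[OF WM] by (simp add: tr_mm)
    then have "mat_eq n (mm n T1 Qf) Qf" using mm_idm_left[of n Qf] mat_eq_mm[of n T1 idm Qf Qf] mat_eq_trans[of n "mm n T1 Qf" "mm n idm Qf" Qf] by simp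
    then show ?thesis by (rule mat_eq_mm[OF _ mat_eq_refl])
  qed
  have e2: "mat_eq n (mm n (mm n T2 Qf) (tr Mf')) (mm n (tr Mf) (tr Pf))"
  proof -
    have "mm n (mm n T2 Qf) (tr Mf') = mm n (tr Mf) (mm n (tr Pf) (mm n (tr W') (mm n (mm n Pf Qf) (tr Mf'))))"
      unfolding T2_def R_def by (simp add: mm_assoc)
    also have "mat_eq n \<dots> (mm n (tr Mf) (mm n (tr Pf) (mm n (tr W') (mm n idm (tr Mf')))))"
      by (intro mat_eq_mm mat_eq_refl PQ)
    also have "mat_eq n \<dots> (mm n (tr Mf) (mm n (tr Pf) (mm n (tr W') (tr Mf'))))"
      by (intro mat_eq_mm mat_eq_refl mm_idm_left)
    also have "mm n (tr W') (tr Mf') = tr (mm n Mf' W')" by (simp add: tr_mm)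
    also have "mat_eq n (mm n (tr Mf) (mm n (tr Pf) (tr (mm n Mf' W')))) (mm n (tr Mf) (mm n (tr Pf) idm))"
      using mat_eq_tr[OF MW'] by (intro mat_eq_mm mat_eq_refl) simp
    also have "mat_eq n \<dots> (mm n (tr Mf) (tr Pf))"
      by (intro mat_eq_mm mat_eq_refl mm_idm_right)
    finally show ?thesis .
  qed
  show ?thesis unfolding e0 using e1 e2 by (auto simp: mat_eq_def algebra_simps)
qed

lemma Jmat_row: "Jmat i k = (if even i then (if k = i + 1 then -1 else 0) else (if k + 1 = i then 1 else 0))"
  unfolding Jmat_def by auto

lemma JJ:
  assumes "i < 2*g" "j < 2*g"
  shows "mm (2*g) Jmat Jmat i j = - idm i j"
proof (cases "even i")
  case True
  then have i1: "i + 1 < 2*g" using assms(1) by presburger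
  have "mm (2*g) Jmat Jmat i j = (\<Sum>k<2*g. if k = i + 1 then - Jmat k j else 0)"
    unfolding mm_def by (intro sum.cong) (auto simp: Jmat_row True)
  also have "\<dots> = - Jmat (i+1) j" using i1 by simp
  finally show ?thesis using True by (auto simp: Jmat_def idm_def)
next
  case False
  then have i1: "i - 1 < 2*g" "i \<ge> 1" using assms(1) by presburger+
  have "mm (2*g) Jmat Jmat i j = (\<Sum>k<2*g. if k = i - 1 then Jmat k j else 0)"
    unfolding mm_def by (intro sum.cong) (auto simp: Jmat_row False)
  also have "\<dots> = Jmat (i - 1) j" using i1 by simp
  finally show ?thesis using False i1 by (auto simp: Jmat_def idm_def)
qed


lemma laurent_common_denom:
  fixes n :: nat
  assumes "\<And>i k. i < n \<Longrightarrow> k < n \<Longrightarrow> laurent (G i k)"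
  obtains L K where "\<And>i k. i < n \<Longrightarrow> k < n \<Longrightarrow> pf (monom 1 K) * G i k = pf (L i k)"
proof -
  have "\<forall>i k. \<exists>p e. i < n \<longrightarrow> k < n \<longrightarrow> G i k = Fract p (monom 1 e)"
    using assms unfolding laurent_def by blast
  then obtain Lp e where Le: "\<And>i k. i < n \<Longrightarrow> k < n \<Longrightarrow> G i k = Fract (Lp i k) (monom 1 (e i k))"
    by metis
  define K where "K = (\<Sum>i<n. \<Sum>k<n. e i k)"
  have eK: "e i k \<le> K" if "i < n" "k < n" for i k
  proof -
    have "e i k \<le> (\<Sum>k<n. e i k)" using that by (intro member_le_sum) auto
    also have "\<dots> \<le> K" unfolding K_def using that
      by (intro member_le_sum[where f = "\<lambda>i. \<Sum>k<n. e i k"]) auto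
    finally show ?thesis .
  qed
  show ?thesis
  proof (rule that[of K "\<lambda>i k. Lp i k * monom 1 (K - e i k)"])
    fix i k assume ik: "i < n" "k < n"
    have m: "monom (1::rat) K = monom 1 (K - e i k) * monom 1 (e i k)"
      using eK[OF ik] by (simp add: mult_monom)
    show "pf (monom 1 K) * G i k = pf (Lp i k * monom 1 (K - e i k))"
      unfolding Le[OF ik] pf_def by (simp add: eq_fract m algebra_simps)
  qed
qed


lemma J_left:
  assumes seif: "seifert_matrix g V"
  shows "mat_eq (2*g) (mm (2*g) (\<lambda>i j. - Jmat i j) (\<lambda>i j. V i j - V j i)) idm"
proof -
  have "mat_eq (2*g) (\<lambda>i j. V i j - V j i) Jmat" using seif unfolding seifert_matrix_def mat_eq_def by blast
  then have "mat_eq (2*g) (mm (2*g) (\<lambda>i j. - Jmat i j) (\<lambda>i j. V i j - V j i)) (mm (2*g) (\<lambda>i j. - Jmat i j) Jmat)"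
    by (intro mat_eq_mm mat_eq_refl)
  also have "mm (2*g) (\<lambda>i j. - Jmat i j) Jmat = (\<lambda>i j. - mm (2*g) Jmat Jmat i j)" by (rule mm_neg_left)
  also have "mat_eq (2*g) \<dots> idm" using JJ by (simp add: mat_eq_def)
  finally show ?thesis .
qed

lemma J_right:
  assumes seif: "seifert_matrix g V"
  shows "mat_eq (2*g) (mm (2*g) (\<lambda>i j. V i j - V j i) (\<lambda>i j. - Jmat i j)) idm"
proof -
  have "mat_eq (2*g) (\<lambda>i j. V i j - V j i) Jmat" using seif unfolding seifert_matrix_def mat_eq_def by blast
  then have "mat_eq (2*g) (mm (2*g) (\<lambda>i j. V i j - V j i) (\<lambda>i j. - Jmat i j)) (mm (2*g) Jmat (\<lambda>i j. - Jmat i j))"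
    by (intro mat_eq_mm mat_eq_refl)
  also have "mm (2*g) Jmat (\<lambda>i j. - Jmat i j) = (\<lambda>i j. - mm (2*g) Jmat Jmat i j)" by (rule mm_neg_right)
  also have "mat_eq (2*g) \<dots> idm" using JJ by (simp add: mat_eq_def)
  finally show ?thesis .
qed

lemma pf_mm: "pf (mm n A B i j) = mm n (\<lambda>i j. pf (A i j)) (\<lambda>i j. pf (B i j)) i j"
  using fun_cong[OF fun_cong[OF mm_pf[of n A B]], of i j] by simp

lemma final_algebra:
  fixes V V' P Q :: "nat \<Rightarrow> nat \<Rightarrow> rat"
  assumes PQ: "mat_eq n (mm n P Q) idm" and QV: "mat_eq n (mm n Q V') (mm n V (tr P))"
    and seif1: "mat_eq n (\<lambda>i j. V i j - V j i) Jmat" and seif2: "mat_eq n (\<lambda>i j. V' i j - V' j i) Jmat"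
  shows "mat_eq n V' (mm n (mm n P V) (tr P))" "mat_eq n (mm n (mm n P Jmat) (tr P)) Jmat"
proof -
  have "mat_eq n V' (mm n idm V')" by (rule mat_eq_sym[OF mm_idm_left])
  also have "mat_eq n \<dots> (mm n (mm n P Q) V')" by (intro mat_eq_mm mat_eq_refl mat_eq_sym[OF PQ])
  also have "mm n (mm n P Q) V' = mm n P (mm n Q V')" by (rule mm_assoc)
  also have "mat_eq n \<dots> (mm n P (mm n V (tr P)))" by (intro mat_eq_mm mat_eq_refl QV)
  also have "\<dots> = mm n (mm n P V) (tr P)" by (rule mm_assoc[symmetric])
  finally show V': "mat_eq n V' (mm n (mm n P V) (tr P))" .
  have "mat_eq n (mm n (mm n P Jmat) (tr P)) (mm n (mm n P (\<lambda>i j. V i j - tr V i j)) (tr P))"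
    using seif1 by (intro mat_eq_mm mat_eq_refl) (simp add: mat_eq_def tr_def)
  also have "mm n (mm n P (\<lambda>i j. V i j - tr V i j)) (tr P) =
      (\<lambda>i j. mm n (mm n P V) (tr P) i j - mm n (mm n P (tr V)) (tr P) i j)"
    by (simp add: mm_diff_left mm_diff_right)
  also have "mm n (mm n P (tr V)) (tr P) = tr (mm n (mm n P V) (tr P))"
    by (simp add: tr_mm mm_assoc)
  also have "mat_eq n (\<lambda>i j. mm n (mm n P V) (tr P) i j - tr (mm n (mm n P V) (tr P)) i j) (\<lambda>i j. V' i j - V' j i)"
    using V' by (auto simp: mat_eq_def tr_def)
  also have "mat_eq n \<dots> Jmat" by (rule seif2)
  finally show "mat_eq n (mm n (mm n P Jmat) (tr P)) Jmat" .
qed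


lemmas [trans] = ml_trans

theorem mainTheorem10:
  fixes g :: nat
    and V V' :: "nat \<Rightarrow> nat \<Rightarrow> rat"
    and sc :: "rat \<Rightarrow> 'a::ab_group_add \<Rightarrow> 'a" and tau :: "'a \<Rightarrow> 'a"
    and phi :: "'a \<Rightarrow> 'a \<Rightarrow> rat poly fract" and b :: "nat \<Rightarrow> 'a"
    and sc' :: "rat \<Rightarrow> 'b::ab_group_add \<Rightarrow> 'b" and tau' :: "'b \<Rightarrow> 'b"
    and phi' :: "'b \<Rightarrow> 'b \<Rightarrow> rat poly fract" and b' :: "nat \<Rightarrow> 'b"
    and xi :: "'a \<Rightarrow> 'b"
  assumes mod1: "laurent_module sc tau" and mod2: "laurent_module sc' tau'"
    and form1: "blanchfield_type_form sc tau phi" and form2: "blanchfield_type_form sc' tau' phi'"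
    and seif1: "seifert_matrix g V" and seif2: "seifert_matrix g V'"
    and gen1: "assoc_generators g V sc tau phi b"
    and gen2: "assoc_generators g V' sc' tau' phi' b'"
    and xi_lin: "Vector_Spaces.linear sc sc' xi" and xi_bij: "bij xi"
    and xi_tau: "\<forall>x. xi (tau x) = tau' (xi x)"
    and xi_pres: "\<forall>x y. mod_laurent (phi' (xi x) (xi y)) (phi x y)"
    and inv1: "mat_invertible (2*g) V" and inv2: "mat_invertible (2*g) V'"
  shows "is_family_basis (2*g) sc b \<and> is_family_basis (2*g) sc' b' \<and>
         (\<forall>P. (\<forall>i<2*g. xi (b i) = (\<Sum>k<2*g. sc' (P k i) (b' k))) \<longrightarrow>
              symplectic g P \<and>
              mat_eq (2*g) V' (mat_mult (2*g) (mat_mult (2*g) P V) (mat_transp P)))"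
proof (intro conjI allI impI)
  show "is_family_basis (2*g) sc b" by (rule fam_basis[OF mod1 gen1 inv1])
  show "is_family_basis (2*g) sc' b'" by (rule fam_basis[OF mod2 gen2 inv2])
  fix P assume Pdef: "\<forall>i<2*g. xi (b i) = (\<Sum>k<2*g. sc' (P k i) (b' k))"
  define n where "n = 2*g"
  interpret vs1: vector_space sc using mod1 unfolding laurent_module_def by blast
  interpret vs2: vector_space sc' using mod2 unfolding laurent_module_def by blast
  have hom: "module_hom sc sc' xi" using xi_lin linear_iff_module_hom by blast
  have ind1: "c l = 0" if "(\<Sum>i<n. sc (c i) (b i)) = 0" "l < n" for c l
    using fam_indep[OF gen1 inv1, of c l] that n_def by simp
  have ind2: "c l = 0" if "(\<Sum>i<n. sc' (c i) (b' i)) = 0" "l < n" for c l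
    using fam_indep[OF gen2 inv2, of c l] that n_def by simp
  have Pd: "xi (b i) = (\<Sum>k<n. sc' (P k i) (b' k))" if "i < n" for i using Pdef that n_def by simp
  have "\<forall>k. \<exists>c. b' k = xi (\<Sum>j<n. sc (c j) (b j))"
  proof
    fix k
    obtain y where y: "b' k = xi y" using xi_bij by (metis bij_pointE)
    obtain c where "y = (\<Sum>j<2*g. sc (c j) (b j))" using fam_repr[OF mod1 gen1 inv1] by blast
    then show "\<exists>c. b' k = xi (\<Sum>j<n. sc (c j) (b j))" using y n_def by blast
  qed
  then obtain Qf where Qf: "\<And>k. b' k = xi (\<Sum>j<n. sc (Qf k j) (b j))" by metis
  define Q where "Q j k = Qf k j" for j k
  have b'Q: "b' k = (\<Sum>j<n. sc' (Q j k) (xi (b j)))" for k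
    using Qf[of k] by (simp add: module_hom.sum[OF hom] module_hom.scale[OF hom] Q_def)
  have PQ: "mat_eq n (mm n P Q) idm"
  proof (rule vs2.indep_id[where x = b'])
    show "\<And>c l. (\<Sum>i<n. sc' (c i) (b' i)) = 0 \<Longrightarrow> l < n \<Longrightarrow> c l = 0" by (rule ind2)
    fix k assume k: "k < n"
    show "b' k = (\<Sum>l<n. sc' (mm n P Q l k) (b' l))"
      by (rule vs2.comb_compose[where y = "\<lambda>j. xi (b j)", OF _ _ k]) (simp_all add: b'Q Pd)
  qed
  have QP: "mat_eq n (mm n Q P) idm"
  proof (rule vs1.indep_id[where x = b])
    show "\<And>c l. (\<Sum>i<n. sc (c i) (b i)) = 0 \<Longrightarrow> l < n \<Longrightarrow> c l = 0" by (rule ind1)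
    fix k assume k: "k < n"
    have "xi (b k) = (\<Sum>l<n. sc' (mm n Q P l k) (xi (b l)))"
      by (rule vs2.comb_compose[where y = b', OF _ _ k]) (simp_all add: b'Q Pd)
    also have "\<dots> = xi (\<Sum>l<n. sc (mm n Q P l k) (b l))"
      by (simp add: module_hom.sum[OF hom] module_hom.scale[OF hom])
    finally show "b k = (\<Sum>l<n. sc (mm n Q P l k) (b l))"
      using xi_bij by (simp add: bij_is_inj inj_eq)
  qed
  obtain W where W1: "\<And>i j. i < n \<Longrightarrow> j < n \<Longrightarrow> (\<Sum>k<n. W i k * pf (pres_mat V k j)) = (if i = j then 1 else 0)"
    and W3: "\<And>i k. i < n \<Longrightarrow> k < n \<Longrightarrow> mod_laurent (phi (b i) (b k)) (pf [:1, -1:] * W k i)"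
    using gen1 unfolding assoc_generators_def n_def by blast
  obtain W' where W2': "\<And>i j. i < n \<Longrightarrow> j < n \<Longrightarrow> (\<Sum>k<n. pf (pres_mat V' i k) * W' k j) = (if i = j then 1 else 0)"
    and W3': "\<And>i k. i < n \<Longrightarrow> k < n \<Longrightarrow> mod_laurent (phi' (b' i) (b' k)) (pf [:1, -1:] * W' k i)"
    using gen2 unfolding assoc_generators_def n_def by blast
  define c where "c = pf [:1, -1:]"
  define Pf where "Pf = (\<lambda>i j. pf [:P i j:])"
  define Qm where "Qm = (\<lambda>i j. pf [:Q i j:])"
  define G where "G = (\<lambda>i k. c * tr W i k - c * mm n (mm n (tr Pf) (tr W')) Pf i k)"
  have Glaur: "laurent (G i k)" if ik: "i < n" "k < n" for i k
  proof -
    have "mod_laurent (c * W k i) (phi (b i) (b k))" using W3[OF ik] unfolding c_def by (rule ml_sym)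
    also have "mod_laurent (phi (b i) (b k)) (phi' (xi (b i)) (xi (b k)))"
      using xi_pres by (simp add: ml_sym)
    also have "phi' (xi (b i)) (xi (b k)) = phi' (\<Sum>l<n. sc' (P l i) (b' l)) (\<Sum>m<n. sc' (P m k) (b' m))"
      using Pd ik by simp
    also have "mod_laurent \<dots> (\<Sum>l<n. pf [:P l i:] * phi' (b' l) (\<Sum>m<n. sc' (P m k) (b' m)))"
      by (rule form_sum_left[OF form2]) simp
    also have "mod_laurent \<dots> (\<Sum>l<n. pf [:P l i:] * (\<Sum>m<n. pf [:P m k:] * phi' (b' l) (b' m)))"
      by (intro ml_sum ml_mult form_sum_right[OF form2]) simp
    also have "mod_laurent \<dots> (\<Sum>l<n. pf [:P l i:] * (\<Sum>m<n. pf [:P m k:] * (c * W' m l)))"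
      unfolding c_def by (intro ml_sum ml_mult W3') auto
    also have "(\<Sum>l<n. pf [:P l i:] * (\<Sum>m<n. pf [:P m k:] * (c * W' m l))) = c * mm n (mm n (tr Pf) (tr W')) Pf i k"
    proof -
      have "(\<Sum>l<n. pf [:P l i:] * (\<Sum>m<n. pf [:P m k:] * (c * W' m l))) =
         (\<Sum>l<n. \<Sum>m<n. c * (pf [:P l i:] * W' m l * pf [:P m k:]))"
        by (simp add: sum_distrib_left mult_ac)
      also have "\<dots> = (\<Sum>m<n. \<Sum>l<n. c * (pf [:P l i:] * W' m l * pf [:P m k:]))"
        by (rule sum.swap)
      also have "\<dots> = c * mm n (mm n (tr Pf) (tr W')) Pf i k"
        unfolding mm_def tr_def Pf_def by (simp add: sum_distrib_left sum_distrib_right mult_ac)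
      finally show ?thesis .
    qed
    finally show ?thesis unfolding G_def mod_laurent_def by (simp add: tr_def)
  qed
  obtain K L where LK: "\<And>i k. i < n \<Longrightarrow> k < n \<Longrightarrow> pf (monom 1 K) * G i k = pf (L i k)"
  proof (rule laurent_common_denom[of n G])
    show "\<And>i k. i < n \<Longrightarrow> k < n \<Longrightarrow> laurent (G i k)" by (rule Glaur)
  next
    fix K' L' assume "\<And>i k. i < n \<Longrightarrow> k < n \<Longrightarrow> pf (monom 1 K') * G i k = pf (L' i k)"
    then show thesis by (rule that)
  qed
  obtain B where VB: "mat_eq n (mm n V B) idm" and BV: "mat_eq n (mm n B V) idm"
    using inv_obtain[OF inv1] n_def by blast
  obtain B' where VB': "mat_eq n (mm n V' B') idm" and BV': "mat_eq n (mm n B' V') idm"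
    using inv_obtain[OF inv2] n_def by blast
  define Mf where "Mf = (\<lambda>i j. pf (pres_mat V i j))"
  define Mf' where "Mf' = (\<lambda>i j. pf (pres_mat V' i j))"
  define Mt where "Mt = linm (\<lambda>i j. - V i j) (tr V)"
  define Mt' where "Mt' = linm (\<lambda>i j. - V' i j) (tr V')"
  define Qp where "Qp = (\<lambda>i j. [:Q i j:])"
  define Pp where "Pp = (\<lambda>i j. [:P i j:])"
  define Lf where "Lf = (\<lambda>i j. pf (L i j))"
  define pK where "pK = pf (monom 1 K)"
  have MtMf: "(\<lambda>i j. pf (Mt i j)) = tr Mf" unfolding Mt_def Mf_def linm_def pres_mat_def tr_def by simp
  have MtMf': "(\<lambda>i j. pf (Mt' i j)) = tr Mf'" unfolding Mt'_def Mf'_def linm_def pres_mat_def tr_def by simp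
  have QpQm: "(\<lambda>i j. pf (Qp i j)) = Qm" unfolding Qp_def Qm_def ..
  have PpPf: "(\<lambda>i j. pf (tr Pp i j)) = tr Pf" unfolding Pp_def Pf_def tr_def ..
  have WM: "mat_eq n (mm n W Mf) idm" using W1 unfolding mat_eq_def mm_def idm_def Mf_def by simp
  have MW': "mat_eq n (mm n Mf' W') idm" using W2' unfolding mat_eq_def mm_def idm_def Mf'_def by simp
  have PQf: "mat_eq n (mm n Pf Qm) idm"
  proof -
    have "mm n Pf Qm = (\<lambda>i j. pf (mm n (\<lambda>i j. [:P i j:]) (\<lambda>i j. [:Q i j:]) i j))"
      unfolding Pf_def Qm_def mm_pf ..
    also have "mm n (\<lambda>i j. [:P i j:]) (\<lambda>i j. [:Q i j:]) = (\<lambda>i j. [:mm n P Q i j:])"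
      by (rule mm_const_poly[symmetric])
    finally have "mm n Pf Qm = (\<lambda>i j. pf [:mm n P Q i j:])" .
    then show ?thesis using PQ unfolding mat_eq_def idm_def
      by (auto simp: pf_1 pf_0 one_pCons[symmetric])
  qed
  have FI: "mat_eq n (mm n (mm n (tr Mf) (mm n G Qm)) (tr Mf'))
           (\<lambda>i j. c * (mm n Qm (tr Mf') i j - mm n (tr Mf) (tr Pf) i j))"
    by (rule fract_identity[OF WM MW' PQf G_def])
  have LG: "mat_eq n Lf (\<lambda>i k. pK * G i k)" using LK unfolding mat_eq_def Lf_def pK_def by simp
  have eqp: "monom 1 K * ([:1, -1:] * (mm n Qp Mt' i j - mm n Mt (tr Pp) i j)) = mm n (mm n Mt (mm n L Qp)) Mt' i j"
    if ij: "i < n" "j < n" for i j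
  proof -
    have "pf (monom 1 K * ([:1, -1:] * (mm n Qp Mt' i j - mm n Mt (tr Pp) i j))) =
        pK * (c * (mm n Qm (tr Mf') i j - mm n (tr Mf) (tr Pf) i j))"
      unfolding pK_def c_def pf_mult pf_diff pf_mm QpQm MtMf MtMf' PpPf ..
    also have "\<dots> = pK * mm n (mm n (tr Mf) (mm n G Qm)) (tr Mf') i j"
      using FI ij unfolding mat_eq_def by simp
    also have "\<dots> = mm n (mm n (tr Mf) (mm n (\<lambda>i k. pK * G i k) Qm)) (tr Mf') i j"
      by (simp add: mm_scal_left mm_scal_right)
    also have "\<dots> = mm n (mm n (tr Mf) (mm n Lf Qm)) (tr Mf') i j"
    proof -
      have "mat_eq n (mm n (mm n (tr Mf) (mm n Lf Qm)) (tr Mf')) (mm n (mm n (tr Mf) (mm n (\<lambda>i k. pK * G i k) Qm)) (tr Mf'))"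
        by (intro mat_eq_mm mat_eq_refl LG)
      then show ?thesis using ij unfolding mat_eq_def by simp
    qed
    also have "\<dots> = pf (mm n (mm n Mt (mm n L Qp)) Mt' i j)"
      unfolding pf_mm mm_pf MtMf MtMf' QpQm Lf_def ..
    finally show ?thesis unfolding pf_inj .
  qed
  have core_res: "mat_eq n (mm n Q V') (mm n V (tr P))"
    by (rule core[OF VB BV VB' BV' J_left[OF seif1, folded n_def] J_right[OF seif2, folded n_def]
          Mt_def Mt'_def Qp_def Pp_def eqp])
  have s1: "mat_eq n (\<lambda>i j. V i j - V j i) Jmat" using seif1 unfolding seifert_matrix_def mat_eq_def n_def by blast
  have s2: "mat_eq n (\<lambda>i j. V' i j - V' j i) Jmat" using seif2 unfolding seifert_matrix_def mat_eq_def n_def by blast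
  note fin = final_algebra[OF PQ core_res s1 s2]
  show "symplectic g P" using fin(2) unfolding symplectic_def mat_mult_mm mat_transp_tr n_def .
  show "mat_eq (2*g) V' (mat_mult (2*g) (mat_mult (2*g) P V) (mat_transp P))"
    using fin(1) unfolding mat_mult_mm mat_transp_tr n_def .
qed


end
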